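(* Let $k\in\mathbb{N}$, $R>0$, and let $S^k=S^k(R)=\{y\in\mathbb{R}^{k+1}: |y|=R\}$. Fix a point $x\in\mathbb{R}^{k+1}$ with $|x|\neq R$. If $\alpha,\beta\in\mathbb{C}$ satisfy $\alpha+\beta=k$, then $$\int_{S^k}\omega(x,y)^\alpha\,dS_y=\int_{S^k}\omega(x,y)^\beta\,dS_y .$$
   Context: For $x\neq y$ in $\mathbb{R}^{k+1}$ the spherical ratio of two points is $\omega(x,y)=\left|\dfrac{|x|^2-|y|^2}{|x-y|^2}\right|$. $dS_y$ denotes the standard $k$-dimensional surface measure on $S^k(R)$. For $|x|\neq R$ and $y\in S^k(R)$ one has $\omega(x,y)>0$, and complex powers are defined by $\omega^\alpha=e^{\alpha\ln\omega}$ with the real logarithm. *)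

theory Defs
  imports "HOL-Analysis.Analysis"
begin

definition spherical_ratio :: "'a::euclidean_space \<Rightarrow> 'a \<Rightarrow> real" where
  "spherical_ratio x y = \<bar>(norm x ^ 2 - norm y ^ 2) / (norm (x - y) ^ 2)\<bar>"

definition cpow_real :: "real \<Rightarrow> complex \<Rightarrow> complex" where
  "cpow_real w a = exp (a * complex_of_real (ln w))"

text \<open>Standard k-dimensional surface measure on the sphere S^k(R) in R^(k+1), k+1 = DIM('a),
  defined by the cone construction: sigma(A) = ((k+1)/R) * lebesgue-volume of
  {t*y : y in A, 0 < t <= 1}.\<close>
definition sphere_surface_measure :: "real \<Rightarrow> 'a::euclidean_space measure" where
  "sphere_surface_measure R =
     distr (density lborel (\<lambda>x. ennreal (real DIM('a) / R) * indicator (ball 0 R - {0}) x))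
           borel (\<lambda>x. (R / norm x) *\<^sub>R x)"

end

theory Submission
  imports Defs "HOL-Analysis.Analysis"
begin



definition hrefl :: "'a::real_inner \<Rightarrow> 'a \<Rightarrow> 'a" where
  "hrefl d h = h - (2 * (h \<bullet> d) / (d \<bullet> d)) *\<^sub>R d"

lemma hrefl_linear: "linear (hrefl d)"
  unfolding hrefl_def
  by (rule linearI) (auto simp: algebra_simps inner_add_left add_divide_distrib scaleR_add_left)

lemma hrefl_inner: "hrefl d a \<bullet> hrefl d b = a \<bullet> b"
proof (cases "d = 0")
  case False
  then have "d \<bullet> d \<noteq> 0" by simp
  then show ?thesis unfolding hrefl_def
    by (simp add: inner_diff_left inner_diff_right inner_commute field_simps)
qed (simp add: hrefl_def)

lemma hrefl_norm: "norm (hrefl d h) = norm h"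
  by (metis hrefl_inner norm_eq_sqrt_inner)

lemma hrefl_invol: "hrefl d (hrefl d h) = h"
proof (cases "d = 0")
  case False
  then have "d \<bullet> d \<noteq> 0" by simp
  then show ?thesis unfolding hrefl_def
    by (simp add: inner_diff_left algebra_simps field_simps)
qed (simp add: hrefl_def)

lemma hrefl_scale: "c \<noteq> 0 \<Longrightarrow> hrefl (c *\<^sub>R d) = hrefl d"
  by (rule ext) (simp add: hrefl_def field_simps power2_eq_square)

lemma hrefl_orth: "orthogonal_transformation (hrefl d)"
  unfolding orthogonal_transformation_def using hrefl_linear hrefl_inner by blast

lemma hrefl_sphere:
  assumes "norm y = R" "y \<noteq> x"
  shows "hrefl (y - x) y = x + ((norm x ^ 2 - R ^ 2) / ((y - x) \<bullet> (y - x))) *\<^sub>R (y - x)"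
proof -
  let ?d = "y - x"
  have q: "?d \<bullet> ?d \<noteq> 0" using assms by simp
  have e: "?d \<bullet> ?d - 2 * (y \<bullet> ?d) = norm x ^ 2 - R ^ 2"
    proof -
    have yy: "y \<bullet> y = R^2" using assms(1) by (metis power2_norm_eq_inner)
    have xx: "x \<bullet> x = norm x^2" by (simp add: power2_norm_eq_inner)
    show ?thesis by (simp add: inner_diff_left inner_diff_right inner_commute yy xx)
  qed
  have "hrefl ?d y = x + (1 - 2 * (y \<bullet> ?d) / (?d \<bullet> ?d)) *\<^sub>R ?d"
    unfolding hrefl_def by (simp add: algebra_simps)
  also have "1 - 2 * (y \<bullet> ?d) / (?d \<bullet> ?d) = (norm x ^ 2 - R ^ 2) / (?d \<bullet> ?d)"
    using q e by (simp add: field_simps)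
  finally show ?thesis .
qed



lemma det_rank1:
  fixes u :: "real^'n" and c :: real
  assumes "norm u = 1"
  shows "det (matrix (\<lambda>h. c *\<^sub>R h + ((1 - c) * (u \<bullet> h)) *\<^sub>R u)) = c ^ (CARD('n) - 1)"
proof -
  obtain i :: 'n where True by blast
  define e :: "real^'n" where "e = axis i 1"
  have ne: "norm e = norm u" using assms by (simp add: e_def)
  obtain Ob where Ob: "orthogonal_transformation Ob" "Ob e = u"
    using orthogonal_transformation_exists[OF ne] by blast
  define L where "L = (\<lambda>h::real^'n. c *\<^sub>R h + ((1 - c) * (u \<bullet> h)) *\<^sub>R u)"
  define Dg where "Dg = (\<lambda>v::real^'n. c *\<^sub>R v + ((1 - c) * (v $ i)) *\<^sub>R e)"
  have linO: "linear Ob" using Ob(1) orthogonal_transformation_linear by blast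
  have linL: "linear L" unfolding L_def
    by (rule linearI) (auto simp: algebra_simps inner_add_right)
  have linD: "linear Dg" unfolding Dg_def
    by (rule linearI) (auto simp: algebra_simps)
  have comm: "L \<circ> Ob = Ob \<circ> Dg"
  proof (rule ext)
    fix v
    have uo: "u \<bullet> Ob v = v $ i"
    proof -
      have "u \<bullet> Ob v = e \<bullet> v" using Ob unfolding orthogonal_transformation_def by metis
      then show ?thesis by (simp add: e_def inner_axis')
    qed
    show "(L \<circ> Ob) v = (Ob \<circ> Dg) v"
      unfolding L_def Dg_def o_def using linO Ob(2) uo
      by (simp add: linear_add linear_scale)
  qed
  have "matrix L ** matrix Ob = matrix Ob ** matrix Dg"
    using comm matrix_compose[OF linO linL] matrix_compose[OF linD linO] by simp
  then have "det (matrix L) * det (matrix Ob) = det (matrix Ob) * det (matrix Dg)"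
    by (metis det_mul)
  moreover have "det (matrix Ob) \<noteq> 0"
    using Ob(1) det_orthogonal_matrix orthogonal_transformation_matrix by fastforce
  ultimately have dl: "det (matrix L) = det (matrix Dg)" by simp
  have "det (matrix Dg) = (\<Prod>j\<in>UNIV. matrix Dg $ j $ j)"
    by (rule det_diagonal) (auto simp: matrix_def Dg_def e_def axis_def)
  also have "\<dots> = (\<Prod>j\<in>UNIV. if j = i then 1 else c)"
    by (rule prod.cong) (auto simp: matrix_def Dg_def e_def axis_def)
  also have "\<dots> = c ^ (CARD('n) - 1)"
  proof -
    have "(\<Prod>j\<in>UNIV. if j = i then 1 else c) = (if i = i then 1 else c) * (\<Prod>j\<in>UNIV - {i}. if j = i then 1 else c)"
      by (rule prod.remove) auto
    also have "\<dots> = (\<Prod>j\<in>UNIV - {i}. c)"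
    proof -
      have "(\<Prod>j\<in>UNIV - {i}. if j = i then 1 else c) = (\<Prod>j\<in>UNIV - {i}. c)" by (rule prod.cong) auto
      then show ?thesis by simp
    qed
    also have "\<dots> = c ^ (CARD('n) - 1)" by (simp add: card_Diff_singleton)
    finally show ?thesis .
  qed
  finally show ?thesis using dl unfolding L_def by simp
qed



definition sproj :: "real \<Rightarrow> 'a::real_normed_vector \<Rightarrow> 'a" where
  "sproj R w = (R / norm w) *\<^sub>R w"

lemma sproj_deriv:
  fixes w :: "'a::real_inner"
  assumes "w \<noteq> 0"
  shows "(sproj R has_derivative (\<lambda>h. (R / norm w) *\<^sub>R (h - ((w /\<^sub>R norm w) \<bullet> h) *\<^sub>R (w /\<^sub>R norm w)))) (at w)"
  unfolding sproj_def
  apply (rule has_derivative_eq_rhs)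
   apply (rule derivative_eq_intros has_derivative_norm[OF assms] | simp add: assms)+
  apply (rule ext)
  using assms apply (simp add: sgn_div_norm field_simps algebra_simps inner_commute power2_eq_square)
  done
lemma alg:
  fixes d h h' w :: "'a::real_inner"
  assumes q: "d \<bullet> d \<noteq> 0" and wD: "w \<bullet> (k *\<^sub>R h') = 0"
  shows "h - ((2 * (h \<bullet> d + w \<bullet> (k *\<^sub>R h'))) / (d \<bullet> d)
      - 2 * (w \<bullet> d) * (2 * (d \<bullet> (k *\<^sub>R h'))) / (d \<bullet> d)^2) *\<^sub>R d
      - (2 * (w \<bullet> d) / (d \<bullet> d)) *\<^sub>R (k *\<^sub>R h')
    = hrefl d (h - (2 * ((k *\<^sub>R w) \<bullet> d) / (d \<bullet> d)) *\<^sub>R h')"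
proof -
  have a: "(2 * (h \<bullet> d + w \<bullet> (k *\<^sub>R h'))) / (d \<bullet> d)
      - 2 * (w \<bullet> d) * (2 * (d \<bullet> (k *\<^sub>R h'))) / (d \<bullet> d)^2
    = 2 * ((h - (2 * ((k *\<^sub>R w) \<bullet> d) / (d \<bullet> d)) *\<^sub>R h') \<bullet> d) / (d \<bullet> d)"
    using q wD by (simp add: inner_diff_left inner_diff_right field_simps power2_eq_square inner_commute)
  show ?thesis unfolding hrefl_def a by (simp add: algebra_simps)
qed
lemma hrefl_deriv:
  fixes d :: "'a::real_inner \<Rightarrow> 'a"
  assumes "(d has_derivative D) (at w)" "d w \<noteq> 0"
  shows "((\<lambda>w. hrefl (d w) w) has_derivative (\<lambda>h. h - ((2 * (h \<bullet> d w + w \<bullet> D h)) / (d w \<bullet> d w)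
      - 2 * (w \<bullet> d w) * (2 * (d w \<bullet> D h)) / (d w \<bullet> d w)^2) *\<^sub>R d w - (2 * (w \<bullet> d w) / (d w \<bullet> d w)) *\<^sub>R D h)) (at w)"
  unfolding hrefl_def
  apply (rule has_derivative_eq_rhs)
   apply (rule derivative_eq_intros assms | simp add: assms)+
  apply (rule ext)
  using assms apply (simp add: field_simps algebra_simps inner_commute power2_eq_square)
  done
definition sPhi :: "real \<Rightarrow> 'a::real_inner \<Rightarrow> 'a \<Rightarrow> 'a" where
  "sPhi R x w = hrefl (sproj R w - x) w"

lemma norm_sproj: "w \<noteq> 0 \<Longrightarrow> R > 0 \<Longrightarrow> norm (sproj R w) = R"
  by (simp add: sproj_def)

lemma sPhi_deriv:
  fixes w x :: "'a::real_inner"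
  assumes "w \<noteq> 0" "R > 0" "norm x \<noteq> R"
  defines "d \<equiv> sproj R w - x"
  defines "c \<equiv> (norm x ^ 2 - R ^ 2) / (d \<bullet> d)"
  defines "u \<equiv> w /\<^sub>R norm w"
  shows "(sPhi R x has_derivative (\<lambda>h. hrefl d (c *\<^sub>R h + ((1 - c) * (u \<bullet> h)) *\<^sub>R u))) (at w)"
proof -
  let ?D = "\<lambda>h. (R / norm w) *\<^sub>R (h - ((w /\<^sub>R norm w) \<bullet> h) *\<^sub>R (w /\<^sub>R norm w))"
  have dd: "((\<lambda>w. sproj R w - x) has_derivative ?D) (at w)"
    using sproj_deriv[OF assms(1), of R] by (auto intro!: derivative_eq_intros)
  have ny: "norm (sproj R w) = R" using norm_sproj assms by blast
  have d0: "d \<noteq> 0" using ny assms(3) unfolding d_def by auto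
  have q0: "d \<bullet> d \<noteq> 0" using d0 by simp
  have sph: "hrefl d (sproj R w) = x + c *\<^sub>R d"
    using hrefl_sphere[OF ny] d0 unfolding d_def c_def by auto
  have mu: "1 - c = 2 * (sproj R w \<bullet> d) / (d \<bullet> d)"
  proof -
    have "sproj R w - (2 * (sproj R w \<bullet> d) / (d \<bullet> d)) *\<^sub>R d = x + c *\<^sub>R d"
      using sph unfolding hrefl_def .
    then have "(sproj R w - x) - (2 * (sproj R w \<bullet> d) / (d \<bullet> d)) *\<^sub>R d = c *\<^sub>R d"
      by (simp add: algebra_simps)
    then have "(1 - 2 * (sproj R w \<bullet> d) / (d \<bullet> d)) *\<^sub>R d = c *\<^sub>R d"
      unfolding d_def by (simp add: algebra_simps)
    then have "1 - 2 * (sproj R w \<bullet> d) / (d \<bullet> d) = c" using d0 by (metis scaleR_cancel_right)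
    then show ?thesis by simp
  qed
  note H = hrefl_deriv[OF dd d0[unfolded d_def]]
  show ?thesis
    unfolding sPhi_def[abs_def]
  proof (rule has_derivative_eq_rhs[OF H], rule ext)
    fix h
    define h' where "h' = h - (u \<bullet> h) *\<^sub>R u"
    have r0: "norm w \<noteq> 0" using assms by simp
    have Dh: "?D h = (R / norm w) *\<^sub>R h'" unfolding h'_def u_def by simp
    have wu: "w = norm w *\<^sub>R u" unfolding u_def using r0 by simp
    have uu: "u \<bullet> u = 1" unfolding u_def using r0 by (simp add: dot_square_norm power2_eq_square)
    have wD: "w \<bullet> ?D h = 0" unfolding Dh h'_def
      by (subst wu) (simp add: inner_diff_right uu)
    have yw: "sproj R w = (R / norm w) *\<^sub>R w" by (simp add: sproj_def)
    have e1: "c *\<^sub>R h + ((1 - c) * (u \<bullet> h)) *\<^sub>R u = h - (1 - c) *\<^sub>R h'"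
      unfolding h'_def by (simp add: algebra_simps)
    show "h - ((2 * (h \<bullet> (sproj R w - x) + w \<bullet> ?D h)) / ((sproj R w - x) \<bullet> (sproj R w - x))
      - 2 * (w \<bullet> (sproj R w - x)) * (2 * ((sproj R w - x) \<bullet> ?D h)) / ((sproj R w - x) \<bullet> (sproj R w - x))^2) *\<^sub>R (sproj R w - x)
      - (2 * (w \<bullet> (sproj R w - x)) / ((sproj R w - x) \<bullet> (sproj R w - x))) *\<^sub>R ?D h
      = hrefl d (c *\<^sub>R h + ((1 - c) * (u \<bullet> h)) *\<^sub>R u)" (is "?lhs = _")
    proof -
      have "?lhs = hrefl d (h - (2 * (((R / norm w) *\<^sub>R w) \<bullet> d) / (d \<bullet> d)) *\<^sub>R h')"
        unfolding d_def[symmetric] Dh by (rule alg[OF q0 wD[unfolded Dh]])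
      also have "\<dots> = hrefl d (h - (1 - c) *\<^sub>R h')" using mu yw by simp
      finally show ?thesis using e1 by simp
    qed
  qed
qed



lemma sproj_hrefl: "sproj R (hrefl d w) = hrefl d (sproj R w)"
  unfolding sproj_def hrefl_norm
  by (simp add: linear_scale[OF hrefl_linear])

lemma sPhi_props:
  fixes w x :: "'a::real_inner"
  assumes "w \<noteq> 0" "R > 0" "norm x \<noteq> R"
  defines "d \<equiv> sproj R w - x"
  defines "c \<equiv> (norm x ^ 2 - R ^ 2) / (d \<bullet> d)"
  shows "norm (sPhi R x w) = norm w"
    and "sproj R (sPhi R x w) = x + c *\<^sub>R d"
    and "sPhi R x (sPhi R x w) = w"
    and "d \<noteq> 0" and "c \<noteq> 0"
proof -
  show n: "norm (sPhi R x w) = norm w" by (simp add: sPhi_def hrefl_norm)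
  have ny: "norm (sproj R w) = R" using norm_sproj assms by blast
  show d0: "d \<noteq> 0" using ny assms(3) unfolding d_def by auto
  show sp: "sproj R (sPhi R x w) = x + c *\<^sub>R d"
    unfolding sPhi_def sproj_hrefl d_def c_def
    by (rule hrefl_sphere[OF ny]) (use d0 d_def in auto)
  have "norm x ^ 2 \<noteq> R ^ 2"
    using assms(2,3) by (metis norm_ge_zero power2_eq_iff_nonneg less_le)
  then show c0: "c \<noteq> 0" using d0 unfolding c_def by simp
  have "sPhi R x (sPhi R x w) = hrefl (c *\<^sub>R d) (sPhi R x w)"
    unfolding sPhi_def[of R x "sPhi R x w"] using sp by simp
  also have "\<dots> = w" using c0 by (simp add: hrefl_scale sPhi_def d_def hrefl_invol)
  finally show "sPhi R x (sPhi R x w) = w" .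
qed

lemma sr_sphere:
  fixes x y :: "'a::euclidean_space"
  assumes "norm y = R"
  shows "spherical_ratio x y = \<bar>norm x ^ 2 - R ^ 2\<bar> / ((y - x) \<bullet> (y - x))"
proof -
  have "norm (x - y) ^ 2 = (y - x) \<bullet> (y - x)"
    by (metis norm_minus_commute power2_norm_eq_inner)
  then show ?thesis using assms by (simp add: spherical_ratio_def abs_divide)
qed

lemma sPhi_jac:
  fixes w x :: "real^'n"
  assumes "w \<noteq> 0" "R > 0" "norm x \<noteq> R"
  shows "\<exists>D. (sPhi R x has_derivative D) (at w) \<and>
             \<bar>det (matrix D)\<bar> = spherical_ratio x (sproj R w) ^ (CARD('n) - 1)"
proof -
  define d where "d = sproj R w - x"
  define c where "c = (norm x ^ 2 - R ^ 2) / (d \<bullet> d)"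
  define u where "u = w /\<^sub>R norm w"
  define L where "L = (\<lambda>h::real^'n. c *\<^sub>R h + ((1 - c) * (u \<bullet> h)) *\<^sub>R u)"
  have der: "(sPhi R x has_derivative (hrefl d \<circ> L)) (at w)"
    using sPhi_deriv[OF assms] unfolding d_def c_def u_def L_def o_def by simp
  have linL: "linear L" unfolding L_def
    by (rule linearI) (auto simp: algebra_simps inner_add_right)
  have "matrix (hrefl d \<circ> L) = matrix (hrefl d) ** matrix L"
    by (rule matrix_compose[OF linL hrefl_linear])
  then have "det (matrix (hrefl d \<circ> L)) = det (matrix (hrefl d)) * det (matrix L)"
    by (simp add: det_mul)
  moreover have "\<bar>det (matrix (hrefl d))\<bar> = 1"
  proof -
    have "orthogonal_matrix (matrix (hrefl d :: real^'n \<Rightarrow> real^'n))"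
      using orthogonal_transformation_matrix hrefl_orth by blast
    then show ?thesis using det_orthogonal_matrix by fastforce
  qed
  moreover have "det (matrix L) = c ^ (CARD('n) - 1)"
    unfolding L_def by (rule det_rank1) (use assms u_def in simp)
  moreover have "\<bar>c\<bar> = spherical_ratio x (sproj R w)"
    using sr_sphere[OF norm_sproj[OF assms(1,2)], of x] unfolding c_def d_def by (simp add: abs_divide)
  ultimately have "\<bar>det (matrix (hrefl d \<circ> L))\<bar> = spherical_ratio x (sproj R w) ^ (CARD('n) - 1)"
    by (simp add: abs_mult power_abs)
  then show ?thesis using der by blast
qed




lemma J_borel[measurable]: "(\<lambda>w. spherical_ratio (x::'a::euclidean_space) (sproj R w) ^ m) \<in> borel_measurable borel"
  unfolding spherical_ratio_def sproj_def by measurable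

lemma sPhi_borel[measurable]: "sPhi R (x::'a::euclidean_space) \<in> borel_measurable borel"
  unfolding sPhi_def[abs_def] hrefl_def sproj_def by measurable

lemma sPhi_image:
  fixes x :: "'a::real_inner"
  assumes "R > 0" "norm x \<noteq> R"
  defines "B \<equiv> ball 0 R - {0}"
  shows "sPhi R x ` (B \<inter> sPhi R x -` A) = B \<inter> A"
proof
  show "sPhi R x ` (B \<inter> sPhi R x -` A) \<subseteq> B \<inter> A"
  proof
    fix z assume "z \<in> sPhi R x ` (B \<inter> sPhi R x -` A)"
    then obtain w where w: "w \<in> B" "sPhi R x w \<in> A" "z = sPhi R x w" by auto
    then have "w \<noteq> 0" "norm w < R" unfolding B_def by auto
    then show "z \<in> B \<inter> A" using w sPhi_props(1)[OF _ assms(1,2)] unfolding B_def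
      by (metis DiffI Int_iff mem_ball_0 norm_eq_zero singletonD)
  qed
next
  show "B \<inter> A \<subseteq> sPhi R x ` (B \<inter> sPhi R x -` A)"
  proof
    fix z assume z: "z \<in> B \<inter> A"
    then have z0: "z \<noteq> 0" unfolding B_def by auto
    have "sPhi R x z \<in> B \<inter> sPhi R x -` A"
      using z sPhi_props(1,3)[OF z0 assms(1,2)] unfolding B_def by auto
    moreover have "z = sPhi R x (sPhi R x z)" using sPhi_props(3)[OF z0 assms(1,2)] by simp
    ultimately show "z \<in> sPhi R x ` (B \<inter> sPhi R x -` A)" by blast
  qed
qed

lemma sPhi_inj:
  fixes x :: "'a::real_inner"
  assumes "R > 0" "norm x \<noteq> R"
  shows "inj_on (sPhi R x) (ball 0 R - {0})"
  by (rule inj_on_inverseI[where g = "sPhi R x"]) (use sPhi_props(3)[OF _ assms] in auto)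

lemma phi_distr:
  fixes x :: "real^'n::{finite,wellorder}"
  assumes R: "R > 0" and xR: "norm x \<noteq> R"
  defines "B \<equiv> ball 0 R - {0}"
  defines "J \<equiv> \<lambda>w. spherical_ratio x (sproj R w) ^ (CARD('n) - 1)"
  shows "distr (density lborel (\<lambda>w. ennreal (indicator B w * J w))) lborel (sPhi R x)
       = density lborel (indicator B)"
proof (rule measure_eqI)
  show "sets (distr (density lborel (\<lambda>w. ennreal (indicator B w * J w))) lborel (sPhi R x))
      = sets (density lborel (indicator B))" by simp
next
  fix A assume "A \<in> sets (distr (density lborel (\<lambda>w. ennreal (indicator B w * J w))) lborel (sPhi R x))"
  then have A: "A \<in> sets borel" by simp
  have meas: "sPhi R x \<in> measurable lborel lborel" using sPhi_borel by simp
  have Bb: "B \<in> sets borel" unfolding B_def by auto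
  define S where "S = B \<inter> sPhi R x -` A"
  have Sb: "S \<in> sets borel" unfolding S_def using Bb A sPhi_borel by (auto intro: measurable_sets_borel)
  have SB: "S \<subseteq> B" unfolding S_def by auto
  have J0: "\<And>w. 0 \<le> J w" unfolding J_def by (simp add: spherical_ratio_def)
  have "emeasure (distr (density lborel (\<lambda>w. ennreal (indicator B w * J w))) lborel (sPhi R x)) A
      = emeasure (density lborel (\<lambda>w. ennreal (indicator B w * J w))) (sPhi R x -` A)"
    using A meas by (simp add: emeasure_distr)
  also have "\<dots> = (\<integral>\<^sup>+ w. ennreal (indicator B w * J w) * indicator (sPhi R x -` A) w \<partial>lborel)"
  proof -
    have Jm: "(\<lambda>w. ennreal (indicator B w * J w)) \<in> borel_measurable lborel"
    proof -
      have "(\<lambda>w. indicator B w * J w) \<in> borel_measurable borel"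
        unfolding J_def using Bb by (intro borel_measurable_times borel_measurable_indicator J_borel) auto
      then show ?thesis by simp
    qed
    show ?thesis using A Jm by (subst emeasure_density) (auto intro: measurable_sets_borel[OF sPhi_borel])
  qed
  also have "\<dots> = (\<integral>\<^sup>+ w. ennreal (indicator S w * J w) \<partial>lborel)"
    by (rule nn_integral_cong) (auto simp: S_def indicator_def)
  finally have L: "emeasure (distr (density lborel (\<lambda>w. ennreal (indicator B w * J w))) lborel (sPhi R x)) A
      = (\<integral>\<^sup>+ w. ennreal (indicator S w * J w) \<partial>lborel)" .
  have "\<forall>w\<in>S. \<exists>D. (sPhi R x has_derivative D) (at w) \<and> \<bar>det (matrix D)\<bar> = J w"
    using sPhi_jac[OF _ R xR] SB unfolding J_def B_def by blast
  then obtain D where D: "\<And>w. w \<in> S \<Longrightarrow> (sPhi R x has_derivative D w) (at w) \<and> \<bar>det (matrix (D w))\<bar> = J w"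
    by metis
  have img: "sPhi R x ` S = B \<inter> A" unfolding S_def B_def by (rule sPhi_image[OF R xR])
  have BAl: "B \<inter> A \<in> lmeasurable"
    by (rule bounded_set_imp_lmeasurable) (use Bb A in \<open>auto simp: B_def intro: bounded_subset\<close>)
  have inj: "inj_on (sPhi R x) S" using sPhi_inj[OF R xR] SB unfolding B_def by (rule inj_on_subset)
  have "((\<lambda>w. \<bar>det (matrix (D w))\<bar>) has_integral measure lebesgue (B \<inter> A)) S"
    using has_measure_differentiable_image[of S "sPhi R x" D "measure lebesgue (B \<inter> A)"] Sb D inj img BAl
    by (auto intro: has_derivative_at_withinI)
  then have "(J has_integral measure lebesgue (B \<inter> A)) S"
    by (rule has_integral_eq[rotated]) (use D in auto)
  then have "(\<integral>\<^sup>+ w. ennreal (indicator S w * J w) \<partial>lborel) = ennreal (measure lebesgue (B \<inter> A))"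
    by (rule nn_integral_has_integral_lebesgue[rotated]) (use J0 in auto)
  also have "\<dots> = emeasure lborel (B \<inter> A)"
  proof -
    have s: "B \<inter> A \<in> sets lborel" using Bb A by auto
    have "emeasure lebesgue (B \<inter> A) \<noteq> top" by (rule fmeasurableD2[OF BAl])
    then have f: "emeasure lborel (B \<inter> A) \<noteq> top" using s by simp
    have m: "measure lebesgue (B \<inter> A) = measure lborel (B \<inter> A)" using s by simp
    have e: "emeasure lborel (B \<inter> A) = ennreal (measure lborel (B \<inter> A))"
      by (rule emeasure_eq_ennreal_measure[OF f])
    show ?thesis unfolding m e ..
  qed
  also have "\<dots> = emeasure (density lborel (indicator B)) A"
  proof -
    have "emeasure (density lborel (indicator B)) A = (\<integral>\<^sup>+ w. indicator B w * indicator A w \<partial>lborel)"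
      using A Bb by (subst emeasure_density) auto
    also have "\<dots> = (\<integral>\<^sup>+ w. indicator (B \<inter> A) w \<partial>lborel)"
      by (rule nn_integral_cong) (simp add: indicator_def)
    also have "\<dots> = emeasure lborel (B \<inter> A)"
      using A Bb by (subst nn_integral_indicator) auto
    finally show ?thesis ..
  qed
  finally show "emeasure (distr (density lborel (\<lambda>w. ennreal (indicator B w * J w))) lborel (sPhi R x)) A
      = emeasure (density lborel (indicator B)) A" using L by simp
qed




lemma sr_borel[measurable]: "(\<lambda>w. spherical_ratio (x::'a::euclidean_space) (sproj R w)) \<in> borel_measurable borel"
  unfolding spherical_ratio_def sproj_def by measurable

lemma cpow_borel[measurable]:
  assumes [measurable]: "g \<in> borel_measurable M"
  shows "(\<lambda>w. cpow_real (g w) a) \<in> borel_measurable M"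
  unfolding cpow_real_def by measurable

lemma omega_pos:
  fixes x :: "'a::euclidean_space"
  assumes "w \<noteq> 0" "R > 0" "norm x \<noteq> R"
  shows "spherical_ratio x (sproj R w) > 0"
proof -
  have ny: "norm (sproj R w) = R" using norm_sproj assms by blast
  have d0: "sproj R w - x \<noteq> 0" using ny assms by auto
  have "norm x ^ 2 \<noteq> R ^ 2"
    using assms(2,3) by (metis norm_ge_zero power2_eq_iff_nonneg less_le)
  then show ?thesis using sr_sphere[OF ny, of x] d0 by simp
qed

lemma omega_inv:
  fixes x :: "'a::euclidean_space"
  assumes w: "w \<noteq> 0" and R: "R > 0" and xR: "norm x \<noteq> R"
  shows "spherical_ratio x (sproj R (sPhi R x w)) = inverse (spherical_ratio x (sproj R w))"
proof -
  define d where "d = sproj R w - x"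
  define s where "s = norm x ^ 2 - R ^ 2"
  define c where "c = s / (d \<bullet> d)"
  have ny: "norm (sproj R w) = R" using norm_sproj w R by blast
  have P: "sproj R (sPhi R x w) = x + c *\<^sub>R d" and d0: "d \<noteq> 0" and c0: "c \<noteq> 0"
    using sPhi_props[OF w R xR] unfolding d_def c_def s_def by auto
  have nPhi: "sPhi R x w \<noteq> 0" using sPhi_props(1)[OF w R xR] w by auto
  have ny2: "norm (x + c *\<^sub>R d) = R" using norm_sproj[OF nPhi R] P by simp
  have s0: "s \<noteq> 0" using c0 unfolding c_def by auto
  have q0: "d \<bullet> d \<noteq> 0" using d0 by simp
  have "spherical_ratio x (x + c *\<^sub>R d) = \<bar>s\<bar> / (c * c * (d \<bullet> d))"
    using sr_sphere[OF ny2, of x] unfolding s_def by simp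
  also have "\<dots> = (d \<bullet> d) / \<bar>s\<bar>"
    using s0 q0 unfolding c_def by (simp add: field_simps abs_mult power2_eq_square)
  also have "\<dots> = inverse (spherical_ratio x (sproj R w))"
    using sr_sphere[OF ny, of x] unfolding s_def d_def by simp
  finally show ?thesis using P by simp
qed

lemma cpow_combine:
  assumes "t > 0"
  shows "complex_of_real (t ^ k) * cpow_real (inverse t) a = cpow_real t (of_nat k - a)"
proof -
  have "complex_of_real (t ^ k) = exp (of_nat k * complex_of_real (ln t))"
  proof -
    have "t ^ k = t powr real k" using assms by (simp add: powr_realpow)
    also have "\<dots> = exp (real k * ln t)" using assms by (simp add: powr_def)
    finally have "t ^ k = exp (real k * ln t)" .
    then show ?thesis by (simp flip: exp_of_real)
  qed
  then show ?thesis using assms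
    by (simp add: cpow_real_def ln_inverse exp_add[symmetric] algebra_simps)
qed

lemma core:
  fixes x :: "real^'n::{finite,wellorder}" and \<alpha> \<beta> :: complex
  assumes R: "R > 0" and xR: "norm x \<noteq> R" and ab: "\<alpha> + \<beta> = of_nat (CARD('n) - 1)"
  shows "(\<integral>w. indicator (ball 0 R - {0}) w *\<^sub>R cpow_real (spherical_ratio x (sproj R w)) \<alpha> \<partial>lborel)
       = (\<integral>w. indicator (ball 0 R - {0}) w *\<^sub>R cpow_real (spherical_ratio x (sproj R w)) \<beta> \<partial>lborel)"
proof -
  define B :: "(real^'n::{finite,wellorder}) set" where "B = ball 0 R - {0}"
  define J where "J = (\<lambda>w. spherical_ratio x (sproj R w) ^ (CARD('n) - 1))"
  define f where "f = (\<lambda>w. cpow_real (spherical_ratio x (sproj R w)) \<alpha>)"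
  have Bb: "B \<in> sets borel" unfolding B_def by auto
  have fm: "f \<in> borel_measurable borel" unfolding f_def by measurable
  have Jm: "(\<lambda>w. indicator B w * J w) \<in> borel_measurable borel"
    unfolding J_def using Bb by (intro borel_measurable_times borel_measurable_indicator J_borel) auto
  have J0: "\<And>w. 0 \<le> J w" unfolding J_def by (simp add: spherical_ratio_def)
  have D: "distr (density lborel (\<lambda>w. ennreal (indicator B w * J w))) lborel (sPhi R x)
       = density lborel (\<lambda>w. ennreal (indicator B w))"
  proof -
    have e: "(\<lambda>w. ennreal (indicator B w)) = indicator B" by (rule ext) (simp add: ennreal_indicator)
    show ?thesis using phi_distr[OF R xR] unfolding e unfolding B_def J_def by simp
  qed
  have "(\<integral>w. indicator B w *\<^sub>R f w \<partial>lborel) = (\<integral>w. f w \<partial>density lborel (\<lambda>w. ennreal (indicator B w)))"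
    using Bb fm by (subst integral_density) auto
  also have "\<dots> = (\<integral>w. f w \<partial>distr (density lborel (\<lambda>w. ennreal (indicator B w * J w))) lborel (sPhi R x))"
    by (simp only: D)
  also have "\<dots> = (\<integral>w. f (sPhi R x w) \<partial>density lborel (\<lambda>w. ennreal (indicator B w * J w)))"
    using fm sPhi_borel by (subst integral_distr) auto
  also have "\<dots> = (\<integral>w. (indicator B w * J w) *\<^sub>R f (sPhi R x w) \<partial>lborel)"
    using fm sPhi_borel Jm J0 by (subst integral_density) auto
  also have "\<dots> = (\<integral>w. indicator B w *\<^sub>R cpow_real (spherical_ratio x (sproj R w)) \<beta> \<partial>lborel)"
  proof (rule Bochner_Integration.integral_cong[OF refl])
    fix w
    show "(indicator B w * J w) *\<^sub>R f (sPhi R x w) = indicator B w *\<^sub>R cpow_real (spherical_ratio x (sproj R w)) \<beta>"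
    proof (cases "w \<in> B")
      case True
      then have w: "w \<noteq> 0" unfolding B_def by auto
      have t: "spherical_ratio x (sproj R w) > 0" by (rule omega_pos[OF w R xR])
      have "J w *\<^sub>R f (sPhi R x w) = complex_of_real (J w) * cpow_real (inverse (spherical_ratio x (sproj R w))) \<alpha>"
        unfolding f_def omega_inv[OF w R xR] by (simp add: scaleR_conv_of_real)
      also have "\<dots> = cpow_real (spherical_ratio x (sproj R w)) (of_nat (CARD('n) - 1) - \<alpha>)"
        unfolding J_def by (rule cpow_combine[OF t])
      also have "of_nat (CARD('n) - 1) - \<alpha> = \<beta>" using ab by (simp add: algebra_simps)
      finally show ?thesis using True by simp
    qed simp
  qed
  finally show ?thesis unfolding B_def f_def .
qed




lemma lborel_iso:
  fixes f :: "'a::euclidean_space \<Rightarrow> 'b::euclidean_space"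
  assumes bij: "bij_betw f Basis Basis" and lin: "linear f" and inn: "\<And>x y. f x \<bullet> f y = x \<bullet> y"
  shows "distr lborel borel f = lborel"
proof -
  have fm: "f \<in> borel_measurable lborel"
    using lin by (simp add: linear_continuous_on linear_conv_bounded_linear borel_measurable_continuous_onI)
  show ?thesis
  proof (rule lborel_eqI[symmetric])
    show "sets (distr lborel borel f) = sets borel" by simp
  next
    fix l u :: 'b
    assume le: "\<And>b. b \<in> Basis \<Longrightarrow> l \<bullet> b \<le> u \<bullet> b"
    define l' :: 'a where "l' = (\<Sum>b\<in>Basis. (l \<bullet> f b) *\<^sub>R b)"
    define u' :: 'a where "u' = (\<Sum>b\<in>Basis. (u \<bullet> f b) *\<^sub>R b)"
    have l'b: "l' \<bullet> b = l \<bullet> f b" if "b \<in> Basis" for b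
      unfolding l'_def using that by (simp add: inner_sum_left inner_Basis if_distrib cong: if_cong)
    have u'b: "u' \<bullet> b = u \<bullet> f b" if "b \<in> Basis" for b
      unfolding u'_def using that by (simp add: inner_sum_left inner_Basis if_distrib cong: if_cong)
    have fB: "f ` Basis = Basis" using bij by (simp add: bij_betw_def)
    have pre: "f -` box l u = box l' u'"
    proof -
      have "x \<in> f -` box l u \<longleftrightarrow> x \<in> box l' u'" for x
      proof -
        have "x \<in> f -` box l u \<longleftrightarrow> (\<forall>c\<in>f ` Basis. l \<bullet> c < f x \<bullet> c \<and> f x \<bullet> c < u \<bullet> c)"
          by (simp add: mem_box fB)
        also have "\<dots> \<longleftrightarrow> (\<forall>b\<in>Basis. l \<bullet> f b < x \<bullet> b \<and> x \<bullet> b < u \<bullet> f b)"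
          by (simp add: inn)
        also have "\<dots> \<longleftrightarrow> x \<in> box l' u'" by (simp add: mem_box l'b u'b)
        finally show ?thesis .
      qed
      then show ?thesis by blast
    qed
    have "emeasure (distr lborel borel f) (box l u) = emeasure lborel (f -` box l u)"
      using fm by (subst emeasure_distr) auto
    also have "\<dots> = emeasure lborel (box l' u')" by (simp add: pre)
    also have "\<dots> = (\<Prod>b\<in>Basis. (u' - l') \<bullet> b)"
      using le fB by (intro emeasure_lborel_box) (auto simp: l'b u'b)
    also have "\<dots> = (\<Prod>c\<in>Basis. (u - l) \<bullet> c)"
    proof -
      have "(\<Prod>b\<in>Basis. (u' - l') \<bullet> b) = (\<Prod>b\<in>Basis. (u - l) \<bullet> f b)"
        by (rule prod.cong) (auto simp: l'b u'b inner_diff_left)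
      also have "\<dots> = (\<Prod>c\<in>Basis. (u - l) \<bullet> c)"
        by (rule prod.reindex_bij_betw[OF bij])
      finally show ?thesis by simp
    qed
    finally show "emeasure (distr lborel borel f) (box l u) = (\<Prod>b\<in>Basis. (u - l) \<bullet> b)" .
  qed
qed




typedef (overloaded) ('a::euclidean_space) bidx = "{..<DIM('a)}"
  morphisms nat_of_bidx bidx_of_nat
  by (rule exI[of _ 0]) simp

lemma bidx_UNIV: "(UNIV :: 'a::euclidean_space bidx set) = bidx_of_nat ` {..<DIM('a)}"
  by (metis type_definition.univ type_definition_bidx)

instance bidx :: (euclidean_space) finite
  by standard (simp add: bidx_UNIV)

instantiation bidx :: (euclidean_space) linorder
begin
definition less_eq_bidx :: "'a bidx \<Rightarrow> 'a bidx \<Rightarrow> bool" where "less_eq_bidx i j = (nat_of_bidx i \<le> nat_of_bidx j)"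
definition less_bidx :: "'a bidx \<Rightarrow> 'a bidx \<Rightarrow> bool" where "less_bidx i j = (nat_of_bidx i < nat_of_bidx j)"
instance
  by standard (auto simp: less_eq_bidx_def less_bidx_def nat_of_bidx_inject)
end

instance bidx :: (euclidean_space) wellorder
proof
  fix P :: "'a bidx \<Rightarrow> bool" and a
  assume H: "\<And>x. (\<And>y. y < x \<Longrightarrow> P y) \<Longrightarrow> P x"
  have "\<forall>a. nat_of_bidx a = n \<longrightarrow> P a" for n
    by (induction n rule: less_induct) (metis H less_bidx_def)
  then show "P a" by blast
qed

lemma card_bidx: "CARD('a::euclidean_space bidx) = DIM('a)"
  using type_definition.card[OF type_definition_bidx] by simp

definition benum :: "nat \<Rightarrow> 'a::euclidean_space" where
  "benum = (SOME f. bij_betw f {..<DIM('a)} Basis)"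

lemma benum_bij: "bij_betw (benum :: nat \<Rightarrow> 'a::euclidean_space) {..<DIM('a)} Basis"
proof -
  have "\<exists>f. bij_betw f {..<DIM('a)} (Basis :: 'a set)"
    using ex_bij_betw_nat_finite[of "Basis :: 'a set"] by (simp add: lessThan_atLeast0)
  then show ?thesis unfolding benum_def by (rule someI_ex)
qed

definition idx :: "'a::euclidean_space bidx \<Rightarrow> 'a" where
  "idx i = benum (nat_of_bidx i)"

lemma idx_bij: "bij_betw (idx :: 'a::euclidean_space bidx \<Rightarrow> 'a) UNIV Basis"
proof -
  have "bij_betw (nat_of_bidx :: 'a bidx \<Rightarrow> nat) UNIV {..<DIM('a)}"
    unfolding bij_betw_def
    by (metis inj_def nat_of_bidx_inject type_definition.Rep_range type_definition_bidx)
  then show ?thesis unfolding idx_def[abs_def] using bij_betw_trans[OF _ benum_bij] by (simp add: o_def)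
qed

lemma idx_Basis: "idx i \<in> Basis"
  using idx_bij by (auto simp: bij_betw_def)

lemma idx_inner: "idx i \<bullet> idx j = (if i = j then 1 else 0)"
proof -
  have "inj (idx :: 'a bidx \<Rightarrow> 'a)" by (metis bij_betw_imp_inj_on idx_bij)
  then show ?thesis using idx_Basis[of i] idx_Basis[of j] by (auto simp: inner_Basis inj_eq)
qed

definition iinv :: "real^('a::euclidean_space bidx) \<Rightarrow> 'a" where
  "iinv v = (\<Sum>i\<in>UNIV. (v $ i) *\<^sub>R idx i)"

definition ifwd :: "'a::euclidean_space \<Rightarrow> real^('a bidx)" where
  "ifwd z = (\<chi> i. z \<bullet> idx i)"

lemma iinv_linear: "linear iinv"
  unfolding iinv_def by (rule linearI) (auto simp: scaleR_add_left sum.distrib scaleR_sum_right)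

lemma iinv_inner_idx: "iinv v \<bullet> idx j = v $ j"
proof -
  have "iinv v \<bullet> idx j = (\<Sum>i\<in>UNIV. v $ i * (idx i \<bullet> idx j))"
    unfolding iinv_def by (simp add: inner_sum_left)
  also have "\<dots> = (\<Sum>i\<in>UNIV. if i = j then v $ j else 0)"
    by (rule sum.cong) (auto simp: idx_inner)
  also have "\<dots> = v $ j" by simp
  finally show ?thesis .
qed

lemma iinv_inner: "iinv v \<bullet> iinv w = v \<bullet> w"
proof -
  have "iinv v \<bullet> iinv w = (\<Sum>j\<in>UNIV. w $ j * (iinv v \<bullet> idx j))"
    unfolding iinv_def[of w] by (simp add: inner_sum_right)
  also have "\<dots> = (\<Sum>j\<in>UNIV. v $ j * w $ j)"
    by (simp add: iinv_inner_idx mult.commute)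
  also have "\<dots> = v \<bullet> w" by (simp add: inner_vec_def)
  finally show ?thesis .
qed

lemma iinv_norm: "norm (iinv v) = norm v"
  by (simp add: norm_eq_sqrt_inner iinv_inner)

lemma iinv_ifwd: "iinv (ifwd z) = z"
proof -
  have "iinv (ifwd z) = (\<Sum>i\<in>UNIV. (z \<bullet> idx i) *\<^sub>R idx i)"
    unfolding iinv_def ifwd_def by simp
  also have "\<dots> = (\<Sum>b\<in>Basis. (z \<bullet> b) *\<^sub>R b)"
    by (rule sum.reindex_bij_betw[OF idx_bij, of "\<lambda>b. (z \<bullet> b) *\<^sub>R b"])
  also have "\<dots> = z" by (rule euclidean_representation)
  finally show ?thesis .
qed

lemma iinv_axis: "iinv (axis j 1) = idx j"
proof -
  have "(\<Sum>i\<in>UNIV. (axis j (1::real) $ i) *\<^sub>R idx i) = (\<Sum>i\<in>UNIV. if i = j then idx j else 0)"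
    by (rule sum.cong) (auto simp: axis_def)
  then show ?thesis unfolding iinv_def by simp
qed

lemma iinv_Basis: "bij_betw iinv (Basis :: (real^('a::euclidean_space bidx)) set) (Basis :: 'a set)"
proof -
  have B: "(Basis :: (real^('a bidx)) set) = (\<lambda>j. axis j 1) ` UNIV"
    by (auto simp: Basis_vec_def)
  have "inj (\<lambda>j::'a bidx. axis j (1::real))" by (auto simp: inj_def axis_eq_axis)
  then have "bij_betw (\<lambda>j::'a bidx. axis j (1::real)) UNIV (Basis :: (real^('a bidx)) set)"
    unfolding B by (simp add: bij_betw_imageI)
  note ax = this
  have "bij_betw (iinv \<circ> (\<lambda>j::'a bidx. axis j (1::real))) UNIV (Basis :: 'a set)"
    using idx_bij by (simp add: o_def iinv_axis)
  then show ?thesis using bij_betw_comp_iff[OF ax] by blast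
qed

lemma iinv_lborel: "distr lborel borel (iinv :: real^('a::euclidean_space bidx) \<Rightarrow> 'a) = lborel"
  by (rule lborel_iso[OF iinv_Basis iinv_linear iinv_inner])




lemma iinv_sproj: "sproj R (iinv v) = iinv (sproj R v)"
  unfolding sproj_def iinv_norm by (simp add: linear_scale[OF iinv_linear])

lemma iinv_eq0: "iinv v = 0 \<longleftrightarrow> v = 0"
  by (metis iinv_norm norm_eq_zero)

lemma sr_iinv: "spherical_ratio x (iinv y) = spherical_ratio (ifwd x) y"
proof -
  have "iinv (ifwd x) - iinv y = iinv (ifwd x - y)"
    by (simp add: linear_diff[OF iinv_linear])
  then have a: "norm (x - iinv y) = norm (ifwd x - y)"
    by (simp add: iinv_ifwd iinv_norm)
  have b: "norm x = norm (ifwd x)" by (metis iinv_ifwd iinv_norm)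
  show ?thesis unfolding spherical_ratio_def a b iinv_norm ..
qed

lemma reduce:
  fixes x :: "'a::euclidean_space" and \<gamma> :: complex
  assumes R: "R > 0"
  shows "(\<integral>y. cpow_real (spherical_ratio x y) \<gamma> \<partial>(sphere_surface_measure R))
    = (real DIM('a) / R) *\<^sub>R (\<integral>w. indicator (ball 0 R - {0}) w *\<^sub>R
          cpow_real (spherical_ratio (ifwd x) (sproj R w)) \<gamma> \<partial>(lborel :: (real^('a bidx)) measure))"
proof -
  define B :: "'a set" where "B = ball 0 R - {0}"
  define c where "c = real DIM('a) / R"
  define F where "F = (\<lambda>y::'a. cpow_real (spherical_ratio x y) \<gamma>)"
  have Bb: "B \<in> sets borel" unfolding B_def by auto
  have Fm: "F \<in> borel_measurable borel" unfolding F_def spherical_ratio_def by measurable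
  have c0: "c \<ge> 0" using R unfolding c_def by simp
  have pr: "(\<lambda>z::'a. (R / norm z) *\<^sub>R z) = sproj R" by (rule ext) (simp add: sproj_def)
  have dens: "(\<lambda>z::'a. ennreal (real DIM('a) / R) * indicator (ball 0 R - {0}) z) = (\<lambda>z. ennreal (c * indicator B z))"
    by (rule ext) (auto simp: B_def c_def indicator_def)
  have spm0: "sproj R \<in> borel_measurable (borel :: 'a measure)" unfolding sproj_def by measurable
  then have spm: "sproj R \<in> borel_measurable (lborel :: 'a measure)" by simp
  have spm2: "sproj R \<in> measurable (density lborel (\<lambda>z::'a. ennreal (c * indicator B z))) borel"
    using spm by (subst measurable_cong_sets[of _ lborel _ borel]) auto
  have "(\<integral>y. F y \<partial>(sphere_surface_measure R)) = (\<integral>z. F (sproj R z) \<partial>density lborel (\<lambda>z. ennreal (c * indicator B z)))"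
    unfolding sphere_surface_measure_def pr dens using Fm
    by (rule integral_distr[OF spm2])
  also have "\<dots> = (\<integral>z. (c * indicator B z) *\<^sub>R F (sproj R z) \<partial>lborel)"
    using Fm spm Bb c0 by (subst integral_density) auto
  also have "\<dots> = c *\<^sub>R (\<integral>z. indicator B z *\<^sub>R F (sproj R z) \<partial>lborel)"
    by (simp add: integral_scaleR_right[symmetric])
  also have "(\<integral>z. indicator B z *\<^sub>R F (sproj R z) \<partial>lborel)
     = (\<integral>z. indicator B z *\<^sub>R F (sproj R z) \<partial>distr lborel borel (iinv :: real^('a bidx) \<Rightarrow> 'a))"
    by (simp add: iinv_lborel)
  also have "\<dots> = (\<integral>v. indicator B (iinv v) *\<^sub>R F (sproj R (iinv v)) \<partial>(lborel :: (real^('a bidx)) measure))"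
  proof (rule integral_distr)
    show "iinv \<in> measurable (lborel :: (real^('a bidx)) measure) borel"
    proof -
      have "continuous_on UNIV (iinv :: real^('a bidx) \<Rightarrow> 'a)"
        using iinv_linear linear_conv_bounded_linear linear_continuous_on by blast
      then show ?thesis using borel_measurable_continuous_onI by simp
    qed
    show "(\<lambda>z. indicator B z *\<^sub>R F (sproj R z)) \<in> borel_measurable borel"
      using Fm Bb spm by measurable
  qed
  also have "\<dots> = (\<integral>w. indicator (ball 0 R - {0}) w *\<^sub>R
          cpow_real (spherical_ratio (ifwd x) (sproj R w)) \<gamma> \<partial>(lborel :: (real^('a bidx)) measure))"
    by (rule Bochner_Integration.integral_cong[OF refl])
      (simp add: B_def F_def iinv_sproj sr_iinv indicator_def iinv_norm iinv_eq0)
  finally show ?thesis unfolding F_def c_def .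
qed

theorem theorem1:
  fixes x :: "'a::euclidean_space" and R :: real and k :: nat and \<alpha> \<beta> :: complex
  assumes "DIM('a) = k + 1"
    and "R > 0"
    and "norm x \<noteq> R"
    and "\<alpha> + \<beta> = of_nat k"
  shows "(\<integral>y. cpow_real (spherical_ratio x y) \<alpha> \<partial>(sphere_surface_measure R))
       = (\<integral>y. cpow_real (spherical_ratio x y) \<beta> \<partial>(sphere_surface_measure R))"
proof -
  have nx: "norm (ifwd x) \<noteq> R" using assms(3) by (metis iinv_ifwd iinv_norm)
  have ab: "\<alpha> + \<beta> = of_nat (CARD('a bidx) - 1)" using assms(1,4) by (simp add: card_bidx)
  show ?thesis
    unfolding reduce[OF assms(2)] using core[OF assms(2) nx ab] by simp
qed


end
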